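(* Let $\mu\in\mathcal{P}(\mathbb{R}^{dT})$, $a\in[0,1)$, $b>0$, $c>0$ and $r\ge0$. Then there exists $C>0$ such that for all $N\in\mathbb{N}$ and $t=1,\dots,T-1$, \[\sum_{G\in\hat\Phi^N_t}(\Vert G\Vert^r+1)^b(\mathrm{diam}(G)+1)^c\mu(G)^{1-a}\le CN^{\frac{ta}T}\sum_{j\ge0}2^{j(rb+dta)}\mu(\mathcal{A}^t_j)^{1-a},\] \[\sum_{G\in\check\Phi^N_t}(\Vert G\Vert^r+1)^b(\mathrm{diam}(G)+1)^c\mu(G)^{1-a}\le CN^{\frac{ta}T}\sum_{j\ge0}2^{j(rb+c)}\mu(\mathcal{A}^t_j)^{1-a}.\]
   Context: Fix integers $d\ge1$, $T\ge2$. $\mathbb{R}^{dt}$ carries the norm $\Vert x_{1:t}\Vert=\sum_{s\le t}\Vert x_s\Vert_{\mathbb{R}^d}$; for $G\subseteq\mathbb{R}^{dt}$, $\Vert G\Vert=\sup_{x\in G}\Vert x\Vert$ and $\mathrm{diam}(G)=\sup_{x,y\in G}\Vert x-y\Vert$. For $\mu\in\mathcal{P}(\mathbb{R}^{dT})$ and Borel $G\subseteq\mathbb{R}^{dt}$, $\mu(G)$ means $\mu_{1:t}(G)$ where $\mu_{1:t}$ is the law of the first $t$ coordinates. Let $\Delta_N=N^{-1/(dT)}$, $m=\lceil1/\Delta_N\rceil$, $\mathcal{A}^t_0=[-1,1]^{dt}$ and $\mathcal{A}^t_j=[-2^j,2^j]^{dt}\setminus[-2^{j-1},2^{j-1}]^{dt}$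 for $j\ge1$. $\hat\Phi^N_t=\{[0,\frac1m]^{dt}+\frac1m\mathbf z:\mathbf z\in\mathbb{Z}^{dt}\}$ (its cubes lying in $\mathcal{A}^t_j$ are grouped by $j$), and $\check\Phi^N_t=\bigcup_{j\ge0}\{[0,\frac{2^{j-1}}m]^{dt}+\frac{2^{j-1}}m\mathbf z\ \text{contained in (the closure of)}\ \mathcal{A}^t_j:\mathbf z\in\mathbb{Z}^{dt}\}$. *)

theory Defs
  imports "HOL-Probability.Probability"
begin

text \<open>A point of R^(dt) is represented as a block vector x_{1:t}: a function
  x :: nat => real^'d, extensional on the block indices {..<t}
  (block s < t corresponds to the paper's x_{s+1}); d = CARD('d).\<close>

definition Rdt :: "nat \<Rightarrow> (nat \<Rightarrow> real^'d) set" where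
  "Rdt t = PiE {..<t} (\<lambda>_. UNIV)"

definition tnorm :: "nat \<Rightarrow> (nat \<Rightarrow> real^'d) \<Rightarrow> real" where
  "tnorm t x = (\<Sum>s<t. norm (x s))"

definition setnorm :: "nat \<Rightarrow> (nat \<Rightarrow> real^'d) set \<Rightarrow> real" where
  "setnorm t G = (SUP x\<in>G. tnorm t x)"

definition setdiam :: "nat \<Rightarrow> (nat \<Rightarrow> real^'d) set \<Rightarrow> real" where
  "setdiam t G = (SUP p\<in>G \<times> G. tnorm t (\<lambda>s. fst p s - snd p s))"

text \<open>Law of the first t blocks and mu(G) := mu_{1:t}(G).\<close>
definition marg :: "(nat \<Rightarrow> real^'d) measure \<Rightarrow> nat \<Rightarrow> (nat \<Rightarrow> real^'d) set \<Rightarrow> real" where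
  "marg \<mu> t G = measure (distr \<mu> (PiM {..<t} (\<lambda>_. borel)) (\<lambda>x. restrict x {..<t})) G"

definition DeltaN :: "nat \<Rightarrow> nat \<Rightarrow> nat \<Rightarrow> real" where
  "DeltaN d T N = real N powr (- 1 / real (d * T))"

definition gridm :: "nat \<Rightarrow> nat \<Rightarrow> nat \<Rightarrow> nat" where
  "gridm d T N = nat \<lceil>1 / DeltaN d T N\<rceil>"

definition cube :: "nat \<Rightarrow> real \<Rightarrow> (nat \<Rightarrow> int^'d) \<Rightarrow> (nat \<Rightarrow> real^'d) set" where
  "cube t h z = {x \<in> Rdt t. \<forall>s<t. \<forall>i.
       h * of_int (z s $ i) \<le> x s $ i \<and> x s $ i \<le> h * (of_int (z s $ i) + 1)}"

definition cbox_t :: "nat \<Rightarrow> real \<Rightarrow> (nat \<Rightarrow> real^'d) set" where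
  "cbox_t t R = {x \<in> Rdt t. \<forall>s<t. \<forall>i. \<bar>x s $ i\<bar> \<le> R}"

definition obox_t :: "nat \<Rightarrow> real \<Rightarrow> (nat \<Rightarrow> real^'d) set" where
  "obox_t t R = {x \<in> Rdt t. \<forall>s<t. \<forall>i. \<bar>x s $ i\<bar> < R}"

definition Ann :: "nat \<Rightarrow> nat \<Rightarrow> (nat \<Rightarrow> real^'d) set" where
  "Ann t j = (if j = 0 then cbox_t t 1 else cbox_t t (2^j) - cbox_t t (2^(j-1)))"

text \<open>Closure of A^t_j (for t >= 1), written out explicitly.\<close>
definition AnnCl :: "nat \<Rightarrow> nat \<Rightarrow> (nat \<Rightarrow> real^'d) set" where
  "AnnCl t j = (if j = 0 then cbox_t t 1 else cbox_t t (2^j) - obox_t t (2^(j-1)))"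

definition hatPhi :: "nat \<Rightarrow> nat \<Rightarrow> nat \<Rightarrow> (nat \<Rightarrow> real^'d) set set" where
  "hatPhi T N t = {cube t (1 / real (gridm CARD('d) T N)) z | z. True}"

definition checkPhi :: "nat \<Rightarrow> nat \<Rightarrow> nat \<Rightarrow> (nat \<Rightarrow> real^'d) set set" where
  "checkPhi T N t = (\<Union>j. {cube t (2^j / 2 / real (gridm CARD('d) T N)) z | z.
      cube t (2^j / 2 / real (gridm CARD('d) T N)) z \<subseteq> AnnCl t j})"

end

theory Submission
  imports Defs
begin
lemma tangent_powr:
  fixes p u :: real assumes "0 < p" "p \<le> 1" "0 \<le> u"
  shows "u powr p \<le> p * u + (1 - p)"
proof (cases "u = 0 \<or> p = 1")
  case True then show ?thesis using assms by auto
next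
  case False
  then have "u powr p * 1 powr (1-p) \<le> p*u + (1-p)*1"
    using assms by (intro Youngs_inequality_0) auto
  then show ?thesis by simp
qed

lemma holder_count:
  fixes x :: "'a \<Rightarrow> real"
  assumes fin: "finite I" and nn: "\<And>i. i \<in> I \<Longrightarrow> 0 \<le> x i" and p: "0 < p" "p \<le> 1"
  shows "(\<Sum>i\<in>I. x i powr p) \<le> real (card I) powr (1 - p) * (\<Sum>i\<in>I. x i) powr p"
proof (cases "(\<Sum>i\<in>I. x i) = 0")
  case True
  then have "\<forall>i\<in>I. x i = 0" using sum_nonneg_eq_0_iff[OF fin] nn by blast
  then show ?thesis by simp
next
  case False
  define S where "S = (\<Sum>i\<in>I. x i)"
  have S0: "S > 0" using False nn S_def by (metis order_less_le sum_nonneg)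
  have In: "I \<noteq> {}" using False by auto
  define n where "n = real (card I)"
  have n0: "n > 0" using In fin n_def by auto
  define l where "l = S / n"
  have l0: "l > 0" using S0 n0 l_def by auto
  have "x i powr p \<le> l powr p * (p * (x i / l) + (1 - p))" if "i \<in> I" for i
  proof -
    have "x i powr p = l powr p * (x i / l) powr p"
      using l0 nn[OF that] by (simp add: powr_divide)
    also have "\<dots> \<le> l powr p * (p * (x i / l) + (1 - p))"
      using tangent_powr[of p "x i / l"] p nn[OF that] l0 by (intro mult_left_mono) auto
    finally show ?thesis .
  qed
  then have "(\<Sum>i\<in>I. x i powr p) \<le> (\<Sum>i\<in>I. l powr p * (p * (x i / l) + (1 - p)))"
    by (rule sum_mono)
  also have "\<dots> = (\<Sum>i\<in>I. (l powr p * p / l) * x i + l powr p * (1-p))"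
    by (simp add: algebra_simps)
  also have "\<dots> = (l powr p * p / l) * S + n * (l powr p * (1-p))"
    by (simp add: sum.distrib sum_distrib_left S_def n_def)
  also have "\<dots> = l powr p * n"
    using l0 n0 unfolding l_def by (simp add: field_simps)
  also have "\<dots> = n powr (1 - p) * S powr p"
    using n0 S0 unfolding l_def by (simp add: powr_divide powr_diff field_simps)
  finally show ?thesis unfolding S_def n_def .
qed

lemma subadd_powr:
  fixes x :: "'a \<Rightarrow> real"
  assumes fin: "finite I" and nn: "\<And>i. i \<in> I \<Longrightarrow> 0 \<le> x i" and p: "0 < p" "p \<le> 1"
  shows "(\<Sum>i\<in>I. x i) powr p \<le> (\<Sum>i\<in>I. x i powr p)"
proof (cases "(\<Sum>i\<in>I. x i) = 0")
  case True then show ?thesis using nn by (simp add: sum_nonneg)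
next
  case False
  define S where "S = (\<Sum>i\<in>I. x i)"
  have S0: "S > 0" using False nn S_def by (metis order_less_le sum_nonneg)
  have "S powr p * (x i / S) \<le> x i powr p" if "i \<in> I" for i
  proof -
    have le: "x i \<le> S" unfolding S_def using fin that nn by (intro member_le_sum) auto
    have "x i / S \<le> (x i / S) powr p"
      using powr_mono'[of p 1 "x i / S"] p nn[OF that] S0 le by auto
    then have "S powr p * (x i / S) \<le> S powr p * (x i / S) powr p"
      by (intro mult_left_mono) auto
    also have "\<dots> = x i powr p" using S0 nn[OF that] by (simp add: powr_divide)
    finally show ?thesis .
  qed
  then have "(\<Sum>i\<in>I. S powr p * (x i / S)) \<le> (\<Sum>i\<in>I. x i powr p)" by (rule sum_mono)
  moreover have "(\<Sum>i\<in>I. S powr p * (x i / S)) = (S powr p / S) * (\<Sum>i\<in>I. x i)"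
    by (simp add: sum_distrib_left)
  moreover have "(S powr p / S) * (\<Sum>i\<in>I. x i) = S powr p" using S0 unfolding S_def by simp
  ultimately show ?thesis unfolding S_def by simp
qed

lemma cube_PiE: "cube t h z = PiE {..<t} (\<lambda>s. cbox (\<chi> k. h * of_int (z s $ k)) (\<chi> k. h * (of_int (z s $ k) + 1)))"
  unfolding cube_def Rdt_def by (rule set_eqI) (simp add: PiE_iff mem_box_cart Ball_def conj_commute)
lemma cbox_t_PiE: "cbox_t t R = PiE {..<t} (\<lambda>s. cbox (\<chi> k. - R) (\<chi> k. R))"
  unfolding cbox_t_def Rdt_def by (rule set_eqI) (simp add: PiE_iff mem_box_cart abs_le_iff minus_le_iff Ball_def conj_commute)
lemma obox_t_PiE: "obox_t t R = PiE {..<t} (\<lambda>s. box (\<chi> k. - R) (\<chi> k. R))"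
  unfolding obox_t_def Rdt_def by (rule set_eqI) (simp add: PiE_iff mem_box_cart abs_less_iff minus_less_iff Ball_def conj_commute)

lemma sets_cube: "cube t h z \<in> sets (PiM {..<t} (\<lambda>_. (borel :: (real^'d) measure)))"
  unfolding cube_PiE by (intro sets_PiM_I_finite) auto

lemma sets_cbox_t: "(cbox_t t R :: (nat \<Rightarrow> real^'d) set) \<in> sets (PiM {..<t} (\<lambda>_. (borel :: (real^'d) measure)))"
  unfolding cbox_t_PiE by (intro sets_PiM_I_finite) auto

lemma sets_obox_t: "(obox_t t R :: (nat \<Rightarrow> real^'d) set) \<in> sets (PiM {..<t} (\<lambda>_. (borel :: (real^'d) measure)))"
  unfolding obox_t_PiE by (intro sets_PiM_I_finite) auto

lemma sets_Ann: "(Ann t j :: (nat \<Rightarrow> real^'d) set) \<in> sets (PiM {..<t} (\<lambda>_. (borel :: (real^'d) measure)))"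
  unfolding Ann_def using sets_cbox_t by auto

lemma sets_AnnCl: "(AnnCl t j :: (nat \<Rightarrow> real^'d) set) \<in> sets (PiM {..<t} (\<lambda>_. (borel :: (real^'d) measure)))"
  unfolding AnnCl_def by (simp add: sets_cbox_t sets_obox_t sets.Diff)

lemma cbox_t_mono: "R \<le> R' \<Longrightarrow> cbox_t t R \<subseteq> cbox_t t R'"
  unfolding cbox_t_def by (auto, meson order_trans)

lemma Ann_sub: "Ann t j \<subseteq> cbox_t t (2^j)"
  unfolding Ann_def by auto

lemma AnnCl_sub: "AnnCl t j \<subseteq> cbox_t t (2^j)"
  unfolding AnnCl_def by auto

definition corner :: "nat \<Rightarrow> real \<Rightarrow> (nat \<Rightarrow> int^'d) \<Rightarrow> (nat \<Rightarrow> real^'d)" where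
  "corner t h z = restrict (\<lambda>s. \<chi> k. h * of_int (z s $ k)) {..<t}"

lemma corner_in: "h \<ge> 0 \<Longrightarrow> corner t h z \<in> cube t h z"
  unfolding corner_def cube_def Rdt_def by (auto simp: PiE_iff distrib_left)

lemma cube_ne: "h \<ge> 0 \<Longrightarrow> cube t h z \<noteq> {}"
  using corner_in by blast

lemma cube_memD: "x \<in> cube t h z \<Longrightarrow> s < t \<Longrightarrow> h * of_int (z s $ k) \<le> x s $ k \<and> x s $ k \<le> h * (of_int (z s $ k) + 1)"
  unfolding cube_def by auto

lemma card_vecs:
  fixes S :: "'d::finite \<Rightarrow> int set"
  assumes "\<And>k. finite (S k)" "\<And>k. card (S k) \<le> B"
  shows "finite {v::int^'d. \<forall>k. v $ k \<in> S k} \<and> card {v::int^'d. \<forall>k. v $ k \<in> S k} \<le> B ^ CARD('d)"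
proof -
  have sub: "{v::int^'d. \<forall>k. v $ k \<in> S k} \<subseteq> vec_lambda ` (PiE UNIV S)"
  proof
    fix v :: "int^'d" assume "v \<in> {v. \<forall>k. v $ k \<in> S k}"
    then have "vec_nth v \<in> PiE UNIV S" by (auto simp: PiE_iff)
    then show "v \<in> vec_lambda ` (PiE UNIV S)" by (metis image_eqI vec_nth_inverse)
  qed
  have fin: "finite (PiE UNIV S)" using assms by (intro finite_PiE) auto
  have "card {v::int^'d. \<forall>k. v $ k \<in> S k} \<le> card (vec_lambda ` (PiE UNIV S))"
    using sub fin by (intro card_mono) auto
  also have "\<dots> \<le> card (PiE UNIV S)" using fin by (rule card_image_le)
  also have "\<dots> = (\<Prod>k\<in>UNIV. card (S k))" by (simp add: card_PiE)
  also have "\<dots> \<le> (\<Prod>k\<in>(UNIV::'d set). B)" using assms by (intro prod_mono) auto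
  also have "\<dots> = B ^ CARD('d)" by simp
  finally show ?thesis using sub fin by (meson finite_imageI finite_subset)
qed

lemma count_cubes:
  fixes F :: "(nat \<Rightarrow> real^'d) set set" and S :: "nat \<Rightarrow> 'd \<Rightarrow> int set"
  assumes F: "\<And>G. G \<in> F \<Longrightarrow> \<exists>z. G = cube t h z \<and> (\<forall>s<t. \<forall>k. z s $ k \<in> S s k)"
    and fin: "\<And>s k. finite (S s k)" and cd: "\<And>s k. card (S s k) \<le> B"
  shows "finite F \<and> card F \<le> B ^ (CARD('d) * t)"
proof -
  define V where "V s = {v::int^'d. \<forall>k. v $ k \<in> S s k}" for s
  have V: "finite (V s) \<and> card (V s) \<le> B ^ CARD('d)" for s
    unfolding V_def using card_vecs[of "S s" B] fin cd by blast
  have sub: "F \<subseteq> (\<lambda>w. cube t h w) ` PiE {..<t} V"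
  proof
    fix G assume "G \<in> F"
    then obtain z where z: "G = cube t h z" "\<forall>s<t. \<forall>k. z s $ k \<in> S s k" using F by blast
    have "cube t h z = cube t h (restrict z {..<t})" unfolding cube_def by auto
    moreover have "restrict z {..<t} \<in> PiE {..<t} V" using z(2) by (auto simp: V_def)
    ultimately show "G \<in> (\<lambda>w. cube t h w) ` PiE {..<t} V" using z(1) by blast
  qed
  have finP: "finite (PiE {..<t} V)" using V by (intro finite_PiE) auto
  have "card F \<le> card ((\<lambda>w. cube t h w) ` PiE {..<t} V)"
    using sub finP by (intro card_mono) auto
  also have "\<dots> \<le> card (PiE {..<t} V)" using finP by (rule card_image_le)
  also have "\<dots> = (\<Prod>s<t. card (V s))" by (simp add: card_PiE)
  also have "\<dots> \<le> (\<Prod>s<t. B ^ CARD('d))" using V by (intro prod_mono) auto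
  also have "\<dots> = B ^ (CARD('d) * t)" by (simp add: power_mult)
  finally show ?thesis using sub finP by (meson finite_imageI finite_subset)
qed

lemma overlap:
  fixes \<nu> :: "(nat \<Rightarrow> real^'d) measure" and F :: "(nat \<Rightarrow> real^'d) set set"
  assumes fm: "finite_measure \<nu>" and sets: "sets \<nu> = sets (PiM {..<t} (\<lambda>_. (borel :: (real^'d) measure)))"
    and F: "finite F" "\<And>G. G \<in> F \<Longrightarrow> \<exists>z. G = cube t h z" and h: "h > 0"
    and A: "A \<in> sets \<nu>"
  shows "(\<Sum>G\<in>F. measure \<nu> (G \<inter> A)) \<le> 2 ^ (CARD('d) * t) * measure \<nu> A"
proof -
  interpret finite_measure \<nu> by (rule fm)
  have GA: "G \<inter> A \<in> sets \<nu>" if "G \<in> F" for G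
    using F(2)[OF that] sets_cube A sets by blast
  have "(\<Sum>G\<in>F. measure \<nu> (G \<inter> A)) = (\<Sum>G\<in>F. integral\<^sup>L \<nu> (indicator (G \<inter> A) :: _ \<Rightarrow> real))"
    using GA by (intro sum.cong) auto
  also have "\<dots> = integral\<^sup>L \<nu> (\<lambda>x. \<Sum>G\<in>F. indicator (G \<inter> A) x :: real)"
    by (rule Bochner_Integration.integral_sum[symmetric]) (use GA in \<open>auto intro!: integrable_real_indicator simp: less_top[symmetric]\<close>)
  also have "\<dots> \<le> integral\<^sup>L \<nu> (\<lambda>x. 2 ^ (CARD('d) * t) * indicator A x :: real)"
  proof (intro integral_mono)
    show "integrable \<nu> (\<lambda>x. \<Sum>G\<in>F. indicator (G \<inter> A) x :: real)" using GA by (auto intro!: integrable_real_indicator simp: less_top[symmetric])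
    show "integrable \<nu> (\<lambda>x. 2 ^ (CARD('d) * t) * indicator A x :: real)" using A by (auto intro!: integrable_real_indicator simp: less_top[symmetric])
    fix x
    show "(\<Sum>G\<in>F. indicator (G \<inter> A) x :: real) \<le> 2 ^ (CARD('d) * t) * indicator A x"
    proof (cases "x \<in> A")
      case False then show ?thesis by (simp add: indicator_def)
    next
      case True
      have "(\<Sum>G\<in>F. indicator (G \<inter> A) x :: real) = (\<Sum>G\<in>F. if x \<in> G then 1 else 0)"
        using True by (intro sum.cong) (auto simp: indicator_def)
      also have "\<dots> = real (card {G\<in>F. x \<in> G})"
        using F(1) by (simp add: sum.If_cases Int_def)
      also have "\<dots> \<le> real (2 ^ (CARD('d) * t))"
      proof -
        define S where "S s k = {\<lfloor>x s $ k / h\<rfloor> - 1, \<lfloor>x s $ k / h\<rfloor>}" for s k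
        have "finite {G\<in>F. x \<in> G} \<and> card {G\<in>F. x \<in> G} \<le> 2 ^ (CARD('d) * t)"
        proof (rule count_cubes[of _ t h S])
          fix G assume "G \<in> {G\<in>F. x \<in> G}"
          then obtain z where z: "G = cube t h z" "x \<in> G" using F(2) by blast
          have "z s $ k \<in> S s k" if "s < t" for s k
          proof -
            have "h * of_int (z s $ k) \<le> x s $ k" "x s $ k \<le> h * (of_int (z s $ k) + 1)"
              using cube_memD[of x t h z s k] z that by auto
            then have "of_int (z s $ k) \<le> x s $ k / h" "x s $ k / h \<le> of_int (z s $ k) + 1"
              using h by (auto simp: field_simps)
            then have "z s $ k \<le> \<lfloor>x s $ k / h\<rfloor>" "\<lfloor>x s $ k / h\<rfloor> \<le> z s $ k + 1"
              by (simp_all add: le_floor_iff floor_le_iff)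
            then show ?thesis unfolding S_def by auto
          qed
          then show "\<exists>z. G = cube t h z \<and> (\<forall>s<t. \<forall>k. z s $ k \<in> S s k)" using z by blast
        next
          fix s k show "finite (S s k)" unfolding S_def by auto
          show "card (S s k) \<le> 2" unfolding S_def by (auto simp: card_insert_if)
        qed
        then show ?thesis by simp
      qed
      finally show ?thesis using True by simp
    qed
  qed
  also have "\<dots> = 2 ^ (CARD('d) * t) * measure \<nu> A" using A by simp
  finally show ?thesis .
qed

lemma cbox_Ann_union:
  fixes \<nu> :: "(nat \<Rightarrow> real^'d) measure"
  assumes fm: "finite_measure \<nu>" and sets: "sets \<nu> = sets (PiM {..<t} (\<lambda>_. (borel :: (real^'d) measure)))"
    and G: "G \<in> sets \<nu>"
  shows "measure \<nu> (G \<inter> cbox_t t (2^J)) = (\<Sum>i\<le>J. measure \<nu> (G \<inter> Ann t i))"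
proof (induction J)
  case 0 then show ?case by (simp add: Ann_def)
next
  case (Suc J)
  interpret finite_measure \<nu> by (rule fm)
  have eq: "G \<inter> cbox_t t (2^Suc J) = (G \<inter> cbox_t t (2^J)) \<union> (G \<inter> Ann t (Suc J))"
    using cbox_t_mono[of "2^J" "2^Suc J" t] by (auto simp: Ann_def)
  have "measure \<nu> (G \<inter> cbox_t t (2^Suc J)) = measure \<nu> (G \<inter> cbox_t t (2^J)) + measure \<nu> (G \<inter> Ann t (Suc J))"
    unfolding eq using G sets sets_cbox_t sets_Ann
    by (intro finite_measure_Union) (auto simp: Ann_def)
  then show ?case using Suc by simp
qed

lemma cube_bounded: "\<exists>J. cube t h z \<subseteq> cbox_t t (2^J)"
proof -
  define R where "R = \<bar>h\<bar> * ((\<Sum>s<t. \<Sum>k\<in>UNIV. \<bar>of_int (z s $ k)\<bar>) + 1)"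
  obtain J where J: "R < 2^J" using real_arch_pow[of 2 R] by auto
  have "cube t h z \<subseteq> cbox_t t R"
  proof
    fix x assume x: "x \<in> cube t h z"
    have "\<bar>x s $ k\<bar> \<le> R" if "s < t" for s k
    proof -
      have b: "h * of_int (z s $ k) \<le> x s $ k" "x s $ k \<le> h * (of_int (z s $ k) + 1)"
        using cube_memD[OF x that] by auto
      have "\<bar>of_int (z s $ k)\<bar> \<le> (\<Sum>k\<in>UNIV. \<bar>of_int (z s $ k)::real\<bar>)"
        by (rule member_le_sum) auto
      also have "\<dots> \<le> (\<Sum>s<t. \<Sum>k\<in>UNIV. \<bar>of_int (z s $ k)::real\<bar>)"
        using that by (intro member_le_sum[of s "{..<t}" "\<lambda>s. \<Sum>k\<in>UNIV. \<bar>of_int (z s $ k)::real\<bar>"]) (auto intro: sum_nonneg)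
      finally have zb: "\<bar>of_int (z s $ k)::real\<bar> \<le> (\<Sum>s<t. \<Sum>k\<in>UNIV. \<bar>of_int (z s $ k)\<bar>)" .
      have "\<bar>x s $ k\<bar> \<le> \<bar>h\<bar> * (\<bar>of_int (z s $ k)\<bar> + 1)"
      proof -
        have "\<bar>h * of_int (z s $ k)\<bar> \<le> \<bar>h\<bar> * (\<bar>of_int (z s $ k)\<bar> + 1)" by (simp add: abs_mult mult_left_mono)
        moreover have "\<bar>h * (of_int (z s $ k) + 1)\<bar> \<le> \<bar>h\<bar> * (\<bar>of_int (z s $ k)\<bar> + 1)"
          by (simp add: abs_mult mult_left_mono)
        ultimately show ?thesis using b by linarith
      qed
      also have "\<dots> \<le> R" unfolding R_def using zb by (intro mult_left_mono) auto
      finally show ?thesis .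
    qed
    then show "x \<in> cbox_t t R" using x unfolding cube_def cbox_t_def by auto
  qed
  also have "\<dots> \<subseteq> cbox_t t (2^J)" using J by (intro cbox_t_mono) auto
  finally show ?thesis by blast
qed

lemma tnorm_le:
  assumes "\<forall>s<t. \<forall>k. \<bar>x s $ k\<bar> \<le> R"
  shows "tnorm t (x :: nat \<Rightarrow> real^'d) \<le> real t * (real CARD('d) * R)"
proof -
  have "tnorm t x \<le> (\<Sum>s<t. real CARD('d) * R)"
    unfolding tnorm_def
  proof (intro sum_mono)
    fix s assume s: "s \<in> {..<t}"
    have "norm (x s) \<le> (\<Sum>k\<in>UNIV. \<bar>x s $ k\<bar>)" by (rule norm_le_l1_cart)
    also have "\<dots> \<le> (\<Sum>k\<in>(UNIV::'d set). R)" using assms s by (intro sum_mono) auto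
    finally show "norm (x s) \<le> real CARD('d) * R" by simp
  qed
  then show ?thesis by simp
qed

lemma setnorm_le:
  assumes ne: "G \<noteq> {}" and b: "\<And>x. x \<in> G \<Longrightarrow> \<forall>s<t. \<forall>k. \<bar>x s $ k\<bar> \<le> R"
  shows "setnorm t (G :: (nat \<Rightarrow> real^'d) set) \<le> real t * (real CARD('d) * R) \<and> 0 \<le> setnorm t G"
proof
  show "setnorm t G \<le> real t * (real CARD('d) * R)"
    unfolding setnorm_def
  proof (rule cSUP_least)
    show "G \<noteq> {}" by (rule ne)
    fix x assume "x \<in> G"
    then show "tnorm t x \<le> real t * (real CARD('d) * R)" by (intro tnorm_le b)
  qed
  obtain x where x: "x \<in> G" using ne by auto
  have bdd: "bdd_above ((\<lambda>x. tnorm t x) ` G)"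
    using b tnorm_le by (intro bdd_aboveI2) blast
  have "0 \<le> tnorm t x" unfolding tnorm_def by (auto intro: sum_nonneg)
  also have "\<dots> \<le> setnorm t G" unfolding setnorm_def using cSUP_upper[OF x bdd] by simp
  finally show "0 \<le> setnorm t G" .
qed

lemma setdiam_le:
  assumes h: "h \<ge> 0"
  shows "setdiam t (cube t h z :: (nat \<Rightarrow> real^'d) set) \<le> real t * (real CARD('d) * h) \<and> 0 \<le> setdiam t (cube t h z :: (nat \<Rightarrow> real^'d) set)"
proof -
  let ?G = "cube t h z :: (nat \<Rightarrow> real^'d) set"
  have b: "tnorm t (\<lambda>s. fst p s - snd p s) \<le> real t * (real CARD('d) * h)" if "p \<in> ?G \<times> ?G" for p
  proof (rule tnorm_le, intro allI impI)
    fix s k assume s: "s < t"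
    have "h * of_int (z s $ k) \<le> fst p s $ k \<and> fst p s $ k \<le> h * (of_int (z s $ k) + 1)"
      "h * of_int (z s $ k) \<le> snd p s $ k \<and> snd p s $ k \<le> h * (of_int (z s $ k) + 1)"
      using cube_memD[of _ t h z s k] that s by (auto simp: mem_Times_iff)
    then show "\<bar>(fst p s - snd p s) $ k\<bar> \<le> h" by (auto simp: algebra_simps)
  qed
  have ne: "?G \<times> ?G \<noteq> {}" using cube_ne[OF h] by auto
  show ?thesis
  proof
    show "setdiam t ?G \<le> real t * (real CARD('d) * h)"
      unfolding setdiam_def using ne b by (intro cSUP_least) auto
    obtain p where p: "p \<in> ?G \<times> ?G" using ne by auto
    have bdd: "bdd_above ((\<lambda>p. tnorm t (\<lambda>s. fst p s - snd p s)) ` (?G \<times> ?G))"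
      using b by (intro bdd_aboveI2) blast
    have "0 \<le> tnorm t (\<lambda>s. fst p s - snd p s)" unfolding tnorm_def by (auto intro: sum_nonneg)
    also have "\<dots> \<le> setdiam t ?G" unfolding setdiam_def using cSUP_upper[OF p bdd] by simp
    finally show "0 \<le> setdiam t ?G" .
  qed
qed

lemma weight_bound:
  fixes s X \<delta> Y r b c :: real
  assumes "0 \<le> s" "s \<le> X" "1 \<le> X" "0 \<le> \<delta>" "\<delta> \<le> Y" "r \<ge> 0" "b > 0" "c > 0"
  shows "(s powr r + 1) powr b * (\<delta> + 1) powr c \<le> 2 powr b * X powr (r * b) * (Y + 1) powr c"
proof -
  have "s powr r \<le> X powr r" using assms by (intro powr_mono2) auto
  moreover have "1 \<le> X powr r" using assms by (simp add: ge_one_powr_ge_zero)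
  ultimately have "s powr r + 1 \<le> 2 * X powr r" by simp
  then have "(s powr r + 1) powr b \<le> (2 * X powr r) powr b"
    using assms by (intro powr_mono2) auto
  also have "\<dots> = 2 powr b * X powr (r * b)"
    using assms by (simp add: powr_mult powr_powr)
  finally have 1: "(s powr r + 1) powr b \<le> 2 powr b * X powr (r * b)" .
  have 2: "(\<delta> + 1) powr c \<le> (Y + 1) powr c" using assms by (intro powr_mono2) auto
  show ?thesis using 1 2 by (intro mult_mono) auto
qed

lemma core:
  fixes \<nu> :: "(nat \<Rightarrow> real^'d) measure" and F :: "(nat \<Rightarrow> real^'d) set set"
  assumes fm: "finite_measure \<nu>" and sets: "sets \<nu> = sets (PiM {..<t} (\<lambda>_. (borel :: (real^'d) measure)))"
    and F: "finite F" "\<And>G. G \<in> F \<Longrightarrow> \<exists>z. G = cube t h z" and h: "h > 0"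
    and A: "A \<in> sets \<nu>" and n: "real (card F) \<le> n" and a: "0 \<le> a" "a < 1"
  shows "(\<Sum>G\<in>F. measure \<nu> (G \<inter> A) powr (1 - a)) \<le> n powr a * (2 ^ (CARD('d) * t) * measure \<nu> A) powr (1 - a)"
proof -
  have "(\<Sum>G\<in>F. measure \<nu> (G \<inter> A) powr (1 - a)) \<le> real (card F) powr (1 - (1 - a)) * (\<Sum>G\<in>F. measure \<nu> (G \<inter> A)) powr (1 - a)"
    using a by (intro holder_count F(1)) auto
  also have "\<dots> \<le> n powr a * (2 ^ (CARD('d) * t) * measure \<nu> A) powr (1 - a)"
  proof (intro mult_mono)
    show "real (card F) powr (1 - (1 - a)) \<le> n powr a" using n a by (simp add: powr_mono2)
    show "(\<Sum>G\<in>F. measure \<nu> (G \<inter> A)) powr (1 - a) \<le> (2 ^ (CARD('d) * t) * measure \<nu> A) powr (1 - a)"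
      using a overlap[OF fm sets F h A] by (intro powr_mono2) (auto intro: sum_nonneg)
  qed (auto intro: sum_nonneg)
  finally show ?thesis .
qed

lemma exists_J:
  assumes "finite F" "\<And>G. G \<in> F \<Longrightarrow> \<exists>h z. G = cube t h z"
  shows "\<exists>J. \<forall>G\<in>F. G \<subseteq> cbox_t t (2^J)"
proof -
  have "\<forall>G\<in>F. \<exists>J. G \<subseteq> cbox_t t (2^J)" using assms(2) cube_bounded by metis
  then obtain Jf where Jf: "\<And>G. G \<in> F \<Longrightarrow> G \<subseteq> cbox_t t (2^Jf G)" by metis
  define J where "J = (\<Sum>G\<in>F. Jf G)"
  have "G \<subseteq> cbox_t t (2^J)" if "G \<in> F" for G
  proof -
    have "Jf G \<le> J" unfolding J_def using assms(1) that by (intro member_le_sum) auto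
    then have "(2::real)^Jf G \<le> 2^J" by (intro power_increasing) auto
    then show ?thesis using Jf[OF that] cbox_t_mono by blast
  qed
  then show ?thesis by blast
qed

lemma split_sum:
  fixes \<nu> :: "(nat \<Rightarrow> real^'d) measure" and F :: "(nat \<Rightarrow> real^'d) set set"
  assumes fm: "finite_measure \<nu>" and sets: "sets \<nu> = sets (PiM {..<t} (\<lambda>_. (borel :: (real^'d) measure)))"
    and F: "finite F" and G: "\<And>G. G \<in> F \<Longrightarrow> G \<in> sets \<nu> \<and> G \<subseteq> cbox_t t (2^J) \<and> f G \<ge> 0"
    and a: "0 \<le> a" "a < 1"
  shows "(\<Sum>G\<in>F. f G * measure \<nu> G powr (1 - a)) \<le> (\<Sum>i\<le>J. \<Sum>G\<in>F. f G * measure \<nu> (G \<inter> Ann t i) powr (1 - a))"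
proof -
  have "(\<Sum>G\<in>F. f G * measure \<nu> G powr (1 - a)) \<le> (\<Sum>G\<in>F. f G * (\<Sum>i\<le>J. measure \<nu> (G \<inter> Ann t i) powr (1 - a)))"
  proof (intro sum_mono mult_left_mono)
    fix G assume GF: "G \<in> F"
    have "measure \<nu> G = measure \<nu> (G \<inter> cbox_t t (2^J))" using G[OF GF] by (metis inf.absorb1)
    also have "\<dots> = (\<Sum>i\<le>J. measure \<nu> (G \<inter> Ann t i))"
      using cbox_Ann_union[OF fm sets] G[OF GF] by blast
    finally show "measure \<nu> G powr (1 - a) \<le> (\<Sum>i\<le>J. measure \<nu> (G \<inter> Ann t i) powr (1 - a))"
      using a by (simp add: subadd_powr)
    show "0 \<le> f G" using G[OF GF] by blast
  qed
  also have "\<dots> = (\<Sum>i\<le>J. \<Sum>G\<in>F. f G * measure \<nu> (G \<inter> Ann t i) powr (1 - a))"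
    by (simp add: sum_distrib_left sum.swap[of _ F])
  finally show ?thesis .
qed

lemma powr_pow2: "((2::real) ^ i) powr e = 2 powr (real i * e)"
  by (simp add: powr_realpow[symmetric] powr_powr)

lemma one_le_prod3:
  assumes "(1::real) \<le> x" "1 \<le> y" "1 \<le> z" shows "1 \<le> x * (y * z)"
proof -
  have yz: "1 * 1 \<le> y * z" using assms by (intro mult_mono) auto
  have "1 * 1 \<le> x * (y * z)" using assms yz by (intro mult_mono) auto
  then show ?thesis by simp
qed

lemma card_sym_int: "card {- int M - 1 .. int M} = 2 * M + 2"
proof -
  have "card {- int M - 1 .. int M} = nat (int M - (- int M - 1) + 1)" by simp
  also have "\<dots> = 2 * M + 2" by linarith
  finally show ?thesis .
qed

lemma hat_case:
  fixes \<nu> :: "(nat \<Rightarrow> real^'d) measure" and F :: "(nat \<Rightarrow> real^'d) set set" and m :: nat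
  assumes fm: "finite_measure \<nu>" and sets: "sets \<nu> = sets (PiM {..<t} (\<lambda>_. (borel :: (real^'d) measure)))"
    and t: "t \<ge> 1" and m: "m \<ge> 1" and a: "0 \<le> a" "a < 1" and bc: "b > 0" "c > 0" "r \<ge> 0"
    and F: "finite F" "F \<subseteq> {cube t (1 / real m) z | z. True}"
  shows "\<exists>J. (\<Sum>G\<in>F. (setnorm t G powr r + 1) powr b * (setdiam t G + 1) powr c * measure \<nu> G powr (1 - a))
     \<le> (2 powr b * (2 * real t * real CARD('d)) powr (r * b) * (real t * real CARD('d) + 1) powr c
          * 4 powr (real CARD('d) * real t * a) * (2 ^ (CARD('d) * t)) powr (1 - a))
       * real m powr (real CARD('d) * real t * a)
       * (\<Sum>i\<le>J. 2 powr (real i * (r * b + real CARD('d) * real t * a)) * measure \<nu> (Ann t i) powr (1 - a))"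
proof -
  define h where "h = 1 / real m"
  have h: "h > 0" "h \<le> 1" using m unfolding h_def by auto
  define D where "D = real CARD('d)"
  define \<tau> where "\<tau> = real t"
  have D1: "D \<ge> 1" unfolding D_def by simp
  have \<tau>1: "\<tau> \<ge> 1" unfolding \<tau>_def using t by simp
  define w where "w G = (setnorm t G powr r + 1) powr b * (setdiam t G + 1) powr c" for G :: "(nat \<Rightarrow> real^'d) set"
  define K where "K = (2::real) ^ (CARD('d) * t)"
  define CH where "CH = 2 powr b * (2 * \<tau> * D) powr (r * b) * (\<tau> * D + 1) powr c * 4 powr (D * \<tau> * a) * K powr (1 - a)"
  have Fc: "\<And>G. G \<in> F \<Longrightarrow> \<exists>z. G = cube t h z" using F(2) unfolding h_def by blast
  have Fc': "\<And>G. G \<in> F \<Longrightarrow> \<exists>h' z. G = cube t h' z" using Fc by blast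
  obtain J where J: "\<forall>G\<in>F. G \<subseteq> cbox_t t (2^J)" using exists_J[OF F(1) Fc'] by blast
  have wnn: "w G \<ge> 0" for G unfolding w_def by simp
  have split: "(\<Sum>G\<in>F. w G * measure \<nu> G powr (1 - a)) \<le> (\<Sum>i\<le>J. \<Sum>G\<in>F. w G * measure \<nu> (G \<inter> Ann t i) powr (1 - a))"
  proof (intro split_sum[OF fm sets F(1)])
    fix G assume G: "G \<in> F"
    then obtain z where "G = cube t h z" using Fc by blast
    then show "G \<in> sets \<nu> \<and> G \<subseteq> cbox_t t (2 ^ J) \<and> 0 \<le> w G" using sets_cube[of t h z] sets J G wnn by simp
  qed (use a in auto)
  have per_i: "(\<Sum>G\<in>F. w G * measure \<nu> (G \<inter> Ann t i) powr (1 - a))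
      \<le> CH * real m powr (D * \<tau> * a) * (2 powr (real i * (r * b + D * \<tau> * a)) * measure \<nu> (Ann t i) powr (1 - a))" for i
  proof -
    define Fi where "Fi = {G\<in>F. G \<inter> Ann t i \<noteq> {}}"
    define Wi where "Wi = 2 powr b * (\<tau> * (D * (2 * 2^i))) powr (r * b) * (\<tau> * (D * 1) + 1) powr c"
    define B where "B = 4 * 2^i * m"
    have FiF: "Fi \<subseteq> F" "finite Fi" unfolding Fi_def using F(1) by auto
    have info: "\<exists>z y0. G = cube t h z \<and> y0 \<in> G \<and> y0 \<in> Ann t i" if "G \<in> Fi" for G
      using that Fc unfolding Fi_def by blast
    have y0b: "\<bar>y0 s $ k\<bar> \<le> 2^i" if "y0 \<in> Ann t i" "s < t" for y0 s k
      using Ann_sub[of t i] that unfolding cbox_t_def by auto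
    have wle: "w G \<le> Wi" if G: "G \<in> Fi" for G
    proof -
      obtain z y0 where zy: "G = cube t h z" "y0 \<in> G" "y0 \<in> Ann t i" using info[OF G] by blast
      have xb: "\<forall>s<t. \<forall>k. \<bar>x s $ k\<bar> \<le> 2 * 2^i" if "x \<in> G" for x
      proof (intro allI impI)
        fix s k assume s: "s < t"
        have "h * of_int (z s $ k) \<le> x s $ k \<and> x s $ k \<le> h * (of_int (z s $ k) + 1)"
             "h * of_int (z s $ k) \<le> y0 s $ k \<and> y0 s $ k \<le> h * (of_int (z s $ k) + 1)"
          using cube_memD[of _ t h z s k] zy that s by auto
        moreover have "\<bar>y0 s $ k\<bar> \<le> 2^i" using y0b zy s by auto
        moreover have "(1::real) \<le> 2^i" by simp
        ultimately have "x s $ k - y0 s $ k \<le> 1" "y0 s $ k - x s $ k \<le> 1" "\<bar>y0 s $ k\<bar> \<le> 2^i" "(1::real) \<le> 2^i"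
          using h by (auto simp: algebra_simps)
        then show "\<bar>x s $ k\<bar> \<le> 2 * 2^i" by (simp only: abs_le_iff) linarith
      qed
      have sn: "setnorm t G \<le> \<tau> * (D * (2 * 2^i)) \<and> 0 \<le> setnorm t G"
        unfolding \<tau>_def D_def using setnorm_le[of G t "2 * 2^i"] xb zy cube_ne h by auto
      have sd: "setdiam t G \<le> \<tau> * (D * h) \<and> 0 \<le> setdiam t G"
        unfolding \<tau>_def D_def using setdiam_le[of h t z] zy h by auto
      have "\<tau> * (D * h) \<le> \<tau> * (D * 1)" using h \<tau>1 D1 by (intro mult_left_mono) auto
      moreover have "1 \<le> \<tau> * (D * (2 * 2^i))"
      proof -
        have "(1::real) \<le> 2^i" by simp
        then have "(1::real) \<le> 2 * 2^i" by linarith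
        then show ?thesis using \<tau>1 D1 by (intro one_le_prod3) auto
      qed
      ultimately show ?thesis unfolding w_def Wi_def using sn sd bc
        by (intro weight_bound) auto
    qed
    have cnt: "finite Fi \<and> card Fi \<le> B ^ (CARD('d) * t)"
    proof (rule count_cubes[where S = "\<lambda>s k. {- int (2^i * m) - 1 .. int (2^i * m)}" and h = h])
      fix G assume "G \<in> Fi"
      then obtain z y0 where zy: "G = cube t h z" "y0 \<in> G" "y0 \<in> Ann t i" using info by blast
      have "z s $ k \<in> {- int (2^i * m) - 1 .. int (2^i * m)}" if s: "s < t" for s k
      proof -
        have c1: "h * of_int (z s $ k) \<le> y0 s $ k" "y0 s $ k \<le> h * (of_int (z s $ k) + 1)"
          using cube_memD[of _ t h z s k] zy s by auto
        have c2: "\<bar>y0 s $ k\<bar> \<le> 2^i" using y0b zy s by auto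
        have mpos: "real m > 0" using m by simp
        have "of_int (z s $ k) / real m \<le> 2^i" using c1 c2 unfolding h_def by auto
        then have "of_int (z s $ k) \<le> (2^i * real m)" using mpos by (simp add: divide_le_eq)
        then have u: "of_int (z s $ k) \<le> (of_int (int (2^i * m)) :: real)" by simp
        have "- (2^i) \<le> (of_int (z s $ k) + 1) / real m" using c1 c2 unfolding h_def by auto
        then have "- (2^i * real m) \<le> of_int (z s $ k) + 1" using mpos by (simp add: le_divide_eq)
        then have l: "(of_int (- int (2^i * m) - 1) :: real) \<le> of_int (z s $ k)" by simp
        show ?thesis using u l by (simp only: of_int_le_iff atLeastAtMost_iff)
      qed
      then show "\<exists>z. G = cube t h z \<and> (\<forall>s<t. \<forall>k. z s $ k \<in> {- int (2^i * m) - 1 .. int (2^i * m)})"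
        using zy by blast
    next
      fix s :: nat and k :: 'd
      show "finite {- int (2^i * m) - 1 .. int (2^i * m)}" by simp
      have "(1::nat) \<le> 2^i * m" using m by simp
      then show "card {- int (2^i * m) - 1 .. int (2^i * m)} \<le> B" unfolding B_def card_sym_int by simp
    qed
    have "(\<Sum>G\<in>F. w G * measure \<nu> (G \<inter> Ann t i) powr (1 - a)) = (\<Sum>G\<in>Fi. w G * measure \<nu> (G \<inter> Ann t i) powr (1 - a))"
      using FiF F(1) by (intro sum.mono_neutral_right) (auto simp: Fi_def)
    also have "\<dots> \<le> (\<Sum>G\<in>Fi. Wi * measure \<nu> (G \<inter> Ann t i) powr (1 - a))"
      using wle by (intro sum_mono mult_right_mono) auto
    also have "\<dots> = Wi * (\<Sum>G\<in>Fi. measure \<nu> (G \<inter> Ann t i) powr (1 - a))"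
      by (simp add: sum_distrib_left)
    also have "\<dots> \<le> Wi * (real (B ^ (CARD('d) * t)) powr a * (K * measure \<nu> (Ann t i)) powr (1 - a))"
    proof (intro mult_left_mono)
      show "0 \<le> Wi" unfolding Wi_def by simp
      show "(\<Sum>G\<in>Fi. measure \<nu> (G \<inter> Ann t i) powr (1 - a)) \<le> real (B ^ (CARD('d) * t)) powr a * (K * measure \<nu> (Ann t i)) powr (1 - a)"
        unfolding K_def
      proof (rule core[OF fm sets])
        show "finite Fi" by (rule FiF)
        show "\<And>G. G \<in> Fi \<Longrightarrow> \<exists>z. G = cube t h z" using info by blast
        show "Ann t i \<in> sets \<nu>" using sets_Ann sets by blast
        show "real (card Fi) \<le> real (B ^ (CARD('d) * t))" using cnt by linarith
      qed (use h a in auto)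
    qed
    also have "\<dots> = CH * real m powr (D * \<tau> * a) * (2 powr (real i * (r * b + D * \<tau> * a)) * measure \<nu> (Ann t i) powr (1 - a))"
    proof -
      have B0: "real B > 0" unfolding B_def using m by simp
      have e1: "real (B ^ (CARD('d) * t)) powr a = real B powr (D * \<tau> * a)"
        using B0 by (simp add: powr_realpow[symmetric] powr_powr D_def \<tau>_def)
      have e2: "real B powr (D * \<tau> * a) = 4 powr (D * \<tau> * a) * 2 powr (real i * (D * \<tau> * a)) * real m powr (D * \<tau> * a)"
        unfolding B_def by (simp add: powr_mult powr_pow2)
      have e3: "(\<tau> * (D * (2 * 2^i))) powr (r * b) = (2 * \<tau> * D) powr (r * b) * 2 powr (real i * (r * b))"
      proof -
        have "\<tau> * (D * (2 * 2^i)) = (2 * \<tau> * D) * 2^i" by simp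
        then show ?thesis using \<tau>1 D1 by (simp add: powr_mult powr_pow2)
      qed
      have e4: "(K * measure \<nu> (Ann t i)) powr (1 - a) = K powr (1 - a) * measure \<nu> (Ann t i) powr (1 - a)"
        unfolding K_def by (simp add: powr_mult)
      have e5: "2 powr (real i * (r * b + D * \<tau> * a)) = 2 powr (real i * (r * b)) * 2 powr (real i * (D * \<tau> * a))"
        by (simp add: distrib_left powr_add)
      show ?thesis unfolding Wi_def CH_def e1 e2 e3 e4 e5 by (simp add: mult_ac)
    qed
    finally show ?thesis .
  qed
  note split
  also have "(\<Sum>i\<le>J. \<Sum>G\<in>F. w G * measure \<nu> (G \<inter> Ann t i) powr (1 - a))
      \<le> (\<Sum>i\<le>J. CH * real m powr (D * \<tau> * a) * (2 powr (real i * (r * b + D * \<tau> * a)) * measure \<nu> (Ann t i) powr (1 - a)))"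
    by (rule sum_mono) (rule per_i)
  also have "\<dots> = CH * real m powr (D * \<tau> * a) * (\<Sum>i\<le>J. 2 powr (real i * (r * b + D * \<tau> * a)) * measure \<nu> (Ann t i) powr (1 - a))"
    by (simp add: sum_distrib_left)
  finally show ?thesis unfolding w_def CH_def K_def D_def \<tau>_def by (intro exI[of _ J]) (simp add: mult_ac)
qed

lemma corner_up_in: "h \<ge> 0 \<Longrightarrow> restrict (\<lambda>s. \<chi> k. h * (of_int (z s $ k) + 1)) {..<t} \<in> cube t h z"
  unfolding cube_def Rdt_def by (auto simp: PiE_iff distrib_left)

lemma card_int_4m: "card {- (2 * int m) .. 2 * int m - 1} = 4 * m"
proof -
  have "card {- (2 * int m) .. 2 * int m - 1} = nat (2 * int m - 1 - (- (2 * int m)) + 1)" by simp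
  also have "\<dots> = 4 * m" by linarith
  finally show ?thesis .
qed

lemma Ann_AnnCl_index:
  assumes y: "y \<in> Ann t i" "y \<in> AnnCl t j"
  shows "i \<le> j \<and> j \<le> i + 1"
proof
  show "i \<le> j"
  proof (rule ccontr)
    assume "\<not> i \<le> j"
    then have ij: "j \<le> i - 1" "i > 0" by auto
    have "y \<in> cbox_t t (2^j)" using y AnnCl_sub by blast
    also have "\<dots> \<subseteq> cbox_t t (2^(i-1))" using ij by (intro cbox_t_mono power_increasing) auto
    finally show False using y ij unfolding Ann_def by auto
  qed
  show "j \<le> i + 1"
  proof (rule ccontr)
    assume "\<not> j \<le> i + 1"
    then have ij: "i + 2 \<le> j" "j > 0" by auto
    have yc: "y \<in> cbox_t t (2^i)" using y Ann_sub by blast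
    have lt: "(2::real)^i < 2^(j-1)" using ij by (intro power_strict_increasing) auto
    have "y \<in> Rdt t" using yc unfolding cbox_t_def by blast
    moreover have "\<forall>s<t. \<forall>k. \<bar>y s $ k\<bar> < 2^(j-1)"
    proof (intro allI impI)
      fix s k assume "s < t"
      then have "\<bar>y s $ k\<bar> \<le> 2^i" using yc unfolding cbox_t_def by blast
      then show "\<bar>y s $ k\<bar> < 2^(j-1)" using lt by linarith
    qed
    ultimately have "y \<in> Rdt t" "\<forall>s<t. \<forall>k. \<bar>y s $ k\<bar> < 2^(j-1)" by auto
    then have "y \<in> obox_t t (2^(j-1))" unfolding obox_t_def by blast
    then show False using y ij unfolding AnnCl_def by auto
  qed
qed

lemma check_case:
  fixes \<nu> :: "(nat \<Rightarrow> real^'d) measure" and F :: "(nat \<Rightarrow> real^'d) set set" and m :: nat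
  assumes fm: "finite_measure \<nu>" and sets: "sets \<nu> = sets (PiM {..<t} (\<lambda>_. (borel :: (real^'d) measure)))"
    and t: "t \<ge> 1" and m: "m \<ge> 1" and a: "0 \<le> a" "a < 1" and bc: "b > 0" "c > 0" "r \<ge> 0"
    and F: "finite F" "F \<subseteq> (\<Union>j. {cube t (2^j / 2 / real m) z | z. cube t (2^j / 2 / real m) z \<subseteq> AnnCl t j})"
  shows "\<exists>J. (\<Sum>G\<in>F. (setnorm t G powr r + 1) powr b * (setdiam t G + 1) powr c * measure \<nu> G powr (1 - a))
     \<le> (2 powr b * (real t * real CARD('d)) powr (r * b) * (real t * real CARD('d) + 1) powr c * 2 powr (r * b + c) * 2
          * 4 powr (real CARD('d) * real t * a) * (2 ^ (CARD('d) * t)) powr (1 - a))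
       * real m powr (real CARD('d) * real t * a)
       * (\<Sum>i\<le>J. 2 powr (real i * (r * b + c)) * measure \<nu> (Ann t i) powr (1 - a))"
proof -
  define hj where "hj j = 2^j / 2 / real m" for j :: nat
  have hj: "hj j > 0" "hj j \<le> 2^j" for j using m unfolding hj_def by (auto simp: field_simps)
  define \<Phi> :: "nat \<Rightarrow> (nat \<Rightarrow> real^'d) set set" where "\<Phi> j = {cube t (hj j) z | z. cube t (hj j) z \<subseteq> AnnCl t j}" for j
  have FPhi: "\<exists>j. G \<in> \<Phi> j" if "G \<in> F" for G using F(2) that unfolding \<Phi>_def hj_def by blast
  have Phi: "\<exists>z. G = cube t (hj j) z \<and> G \<subseteq> AnnCl t j" if "G \<in> \<Phi> j" for G j
    using that unfolding \<Phi>_def by blast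
  define D where "D = real CARD('d)"
  define \<tau> where "\<tau> = real t"
  have D1: "D \<ge> 1" unfolding D_def by simp
  have \<tau>1: "\<tau> \<ge> 1" unfolding \<tau>_def using t by simp
  define e where "e = r * b + c"
  have e0: "e \<ge> 0" unfolding e_def using bc by simp
  define w where "w G = (setnorm t G powr r + 1) powr b * (setdiam t G + 1) powr c" for G :: "(nat \<Rightarrow> real^'d) set"
  define K where "K = (2::real) ^ (CARD('d) * t)"
  define CK where "CK = 2 powr b * (\<tau> * D) powr (r * b) * (\<tau> * D + 1) powr c * 2 powr e * 2 * 4 powr (D * \<tau> * a) * K powr (1 - a)"
  have Fc': "\<And>G. G \<in> F \<Longrightarrow> \<exists>h' z. G = cube t h' z" using FPhi Phi by blast
  obtain J where J: "\<forall>G\<in>F. G \<subseteq> cbox_t t (2^J)" using exists_J[OF F(1) Fc'] by blast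
  have wnn: "w G \<ge> 0" for G unfolding w_def by simp
  have split: "(\<Sum>G\<in>F. w G * measure \<nu> G powr (1 - a)) \<le> (\<Sum>i\<le>J. \<Sum>G\<in>F. w G * measure \<nu> (G \<inter> Ann t i) powr (1 - a))"
  proof (intro split_sum[OF fm sets F(1)])
    fix G assume G: "G \<in> F"
    then obtain h' z where "G = cube t h' z" using Fc' by blast
    then show "G \<in> sets \<nu> \<and> G \<subseteq> cbox_t t (2 ^ J) \<and> 0 \<le> w G" using sets_cube[of t h' z] sets J G wnn by simp
  qed (use a in auto)
  have per_i: "(\<Sum>G\<in>F. w G * measure \<nu> (G \<inter> Ann t i) powr (1 - a))
      \<le> CK * real m powr (D * \<tau> * a) * (2 powr (real i * e) * measure \<nu> (Ann t i) powr (1 - a))" for i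
  proof -
    define Fi where "Fi = {G\<in>F. G \<inter> Ann t i \<noteq> {}}"
    define Wi where "Wi = 2 powr b * (\<tau> * D) powr (r * b) * (\<tau> * D + 1) powr c * 2 powr e * 2 powr (real i * e)"
    define B where "B = 4 * m"
    have FiF: "Fi \<subseteq> F" "finite Fi" unfolding Fi_def using F(1) by auto
    have info: "\<exists>j z y0. G \<in> \<Phi> j \<and> G = cube t (hj j) z \<and> G \<subseteq> AnnCl t j \<and> y0 \<in> G \<and> y0 \<in> Ann t i \<and> i \<le> j \<and> j \<le> i + 1"
      if G: "G \<in> Fi" for G
    proof -
      obtain j where j: "G \<in> \<Phi> j" using FPhi G unfolding Fi_def by blast
      obtain z where z: "G = cube t (hj j) z" "G \<subseteq> AnnCl t j" using Phi[OF j] by blast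
      obtain y0 where y0: "y0 \<in> G" "y0 \<in> Ann t i" using G unfolding Fi_def by blast
      have "i \<le> j \<and> j \<le> i + 1" using Ann_AnnCl_index[of y0 t i j] y0 z by blast
      then show ?thesis using j z y0 by blast
    qed
    have wle: "w G \<le> Wi" if G: "G \<in> Fi" for G
    proof -
      obtain j z y0 where zy: "G = cube t (hj j) z" "G \<subseteq> AnnCl t j" "j \<le> i + 1"
        using info[OF G] by blast
      have xb: "\<forall>s<t. \<forall>k. \<bar>x s $ k\<bar> \<le> 2^j" if "x \<in> G" for x
        using that zy(2) AnnCl_sub[of t j] unfolding cbox_t_def by blast
      have sn: "setnorm t G \<le> \<tau> * (D * 2^j) \<and> 0 \<le> setnorm t G"
      proof -
        have ne: "G \<noteq> {}" using cube_ne[of "hj j" t z] hj(1)[of j] zy by auto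
        show ?thesis unfolding \<tau>_def D_def using setnorm_le[of G t "2^j"] xb ne by blast
      qed
      have sd: "setdiam t G \<le> \<tau> * (D * hj j) \<and> 0 \<le> setdiam t G"
        unfolding \<tau>_def D_def using setdiam_le[of "hj j" t z] zy less_imp_le[OF hj(1)[of j]] by simp
      have sd2: "\<tau> * (D * hj j) \<le> \<tau> * (D * 2^j)" using hj \<tau>1 D1 by (intro mult_left_mono) auto
      have X1: "1 \<le> \<tau> * (D * 2^j)" using \<tau>1 D1 by (intro one_le_prod3) auto
      have "w G \<le> 2 powr b * (\<tau> * (D * 2^j)) powr (r * b) * (\<tau> * (D * 2^j) + 1) powr c"
        unfolding w_def using sn sd sd2 X1 bc by (intro weight_bound) auto
      also have "\<dots> \<le> 2 powr b * ((\<tau> * D) powr (r * b) * 2 powr (real j * (r * b))) * ((\<tau> * D + 1) powr c * 2 powr (real j * c))"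
      proof (intro mult_mono)
        have "\<tau> * (D * 2^j) = (\<tau> * D) * 2^j" by simp
        then show "(\<tau> * (D * 2^j)) powr (r * b) \<le> (\<tau> * D) powr (r * b) * 2 powr (real j * (r * b))"
          using \<tau>1 D1 by (simp add: powr_mult powr_pow2)
        have "\<tau> * (D * 2^j) + 1 \<le> (\<tau> * D + 1) * 2^j"
        proof -
          have "(1::real) \<le> 2^j" by simp
          then show ?thesis by (simp add: algebra_simps)
        qed
        then have "(\<tau> * (D * 2^j) + 1) powr c \<le> ((\<tau> * D + 1) * 2^j) powr c"
          using \<tau>1 D1 bc by (intro powr_mono2) auto
        also have "\<dots> = (\<tau> * D + 1) powr c * 2 powr (real j * c)"
          using \<tau>1 D1 by (simp add: powr_mult powr_pow2)
        finally show "(\<tau> * (D * 2^j) + 1) powr c \<le> (\<tau> * D + 1) powr c * 2 powr (real j * c)" .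
      qed auto
      also have "\<dots> = 2 powr b * (\<tau> * D) powr (r * b) * (\<tau> * D + 1) powr c * 2 powr (real j * e)"
        unfolding e_def by (simp add: distrib_left powr_add mult_ac)
      also have "\<dots> \<le> 2 powr b * (\<tau> * D) powr (r * b) * (\<tau> * D + 1) powr c * 2 powr (real (i + 1) * e)"
        using zy(3) e0 by (intro mult_left_mono powr_mono mult_right_mono) auto
      also have "\<dots> = Wi"
      proof -
        have "2 powr (real (i + 1) * e) = 2 powr e * 2 powr (real i * e)"
          by (simp add: powr_add[symmetric] algebra_simps)
        then show ?thesis unfolding Wi_def by (simp add: mult_ac)
      qed
      finally show ?thesis .
    qed
    have cnt: "finite Fj \<and> card Fj \<le> B ^ (CARD('d) * t)" if Fj: "\<And>G. G \<in> Fj \<Longrightarrow> G \<in> \<Phi> j" for Fj j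
    proof (rule count_cubes[where S = "\<lambda>s k. {- (2 * int m) .. 2 * int m - 1}" and h = "hj j"])
      fix G assume "G \<in> Fj"
      then obtain z where z: "G = cube t (hj j) z" "G \<subseteq> AnnCl t j" using Phi Fj by blast
      have "z s $ k \<in> {- (2 * int m) .. 2 * int m - 1}" if s: "s < t" for s k
      proof -
        have hj0: "hj j \<ge> 0" using hj(1)[of j] by simp
        have lo: "corner t (hj j) z \<in> cbox_t t (2^j)" using corner_in[OF hj0, of t z] z AnnCl_sub[of t j] by blast
        have up: "restrict (\<lambda>s. \<chi> k. hj j * (of_int (z s $ k) + 1)) {..<t} \<in> cbox_t t (2^j)"
          using corner_up_in[OF hj0, of z t] z AnnCl_sub[of t j] by blast
        have c1: "\<bar>hj j * of_int (z s $ k)\<bar> \<le> 2^j" using lo s unfolding cbox_t_def corner_def by auto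
        have c2: "\<bar>hj j * (of_int (z s $ k) + 1)\<bar> \<le> 2^j" using up s unfolding cbox_t_def by auto
        have mpos: "real m > 0" using m by simp
        have q: "2^j / hj j = 2 * real m" unfolding hj_def using mpos by (simp add: field_simps)
        have "- (2^j) \<le> hj j * of_int (z s $ k)" using c1 by linarith
        then have "- (2^j) / hj j \<le> of_int (z s $ k)" using hj(1)[of j] by (simp add: field_simps)
        then have l: "(of_int (- (2 * int m)) :: real) \<le> of_int (z s $ k)" using q by simp
        have "hj j * (of_int (z s $ k) + 1) \<le> 2^j" using c2 by linarith
        then have "of_int (z s $ k) + 1 \<le> 2^j / hj j" using hj(1)[of j] by (simp add: field_simps)
        then have u: "(of_int (z s $ k) :: real) \<le> of_int (2 * int m - 1)" using q by simp
        show ?thesis using u l by (simp only: of_int_le_iff atLeastAtMost_iff)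
      qed
      then show "\<exists>z. G = cube t (hj j) z \<and> (\<forall>s<t. \<forall>k. z s $ k \<in> {- (2 * int m) .. 2 * int m - 1})"
        using z by blast
    next
      fix s :: nat and k :: 'd
      show "finite {- (2 * int m) .. 2 * int m - 1}" by simp
      show "card {- (2 * int m) .. 2 * int m - 1} \<le> B" unfolding B_def card_int_4m by simp
    qed
    define n where "n = real (B ^ (CARD('d) * t))"
    have coreF: "(\<Sum>G\<in>Fj. measure \<nu> (G \<inter> Ann t i) powr (1 - a)) \<le> n powr a * (K * measure \<nu> (Ann t i)) powr (1 - a)"
      if Fj: "finite Fj" "\<And>G. G \<in> Fj \<Longrightarrow> G \<in> \<Phi> j" for Fj j
      unfolding K_def
    proof (rule core[OF fm sets Fj(1)])
      show "\<And>G. G \<in> Fj \<Longrightarrow> \<exists>z. G = cube t (hj j) z" using Phi Fj(2) by blast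
      show "Ann t i \<in> sets \<nu>" using sets_Ann sets by blast
      show "real (card Fj) \<le> n" unfolding n_def using cnt[of Fj j] Fj by simp
    qed (use hj a in auto)
    have "(\<Sum>G\<in>F. w G * measure \<nu> (G \<inter> Ann t i) powr (1 - a)) = (\<Sum>G\<in>Fi. w G * measure \<nu> (G \<inter> Ann t i) powr (1 - a))"
      using FiF F(1) by (intro sum.mono_neutral_right) (auto simp: Fi_def)
    also have "\<dots> \<le> (\<Sum>G\<in>Fi. Wi * measure \<nu> (G \<inter> Ann t i) powr (1 - a))"
      using wle by (intro sum_mono mult_right_mono) auto
    also have "\<dots> = Wi * (\<Sum>G\<in>Fi. measure \<nu> (G \<inter> Ann t i) powr (1 - a))"
      by (simp add: sum_distrib_left)
    also have "\<dots> = Wi * ((\<Sum>G\<in>Fi \<inter> \<Phi> i. measure \<nu> (G \<inter> Ann t i) powr (1 - a)) + (\<Sum>G\<in>Fi - \<Phi> i. measure \<nu> (G \<inter> Ann t i) powr (1 - a)))"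
      using FiF by (simp add: sum.Int_Diff[of Fi _ "\<Phi> i"])
    also have "\<dots> \<le> Wi * (n powr a * (K * measure \<nu> (Ann t i)) powr (1 - a) + n powr a * (K * measure \<nu> (Ann t i)) powr (1 - a))"
    proof (intro mult_left_mono add_mono)
      show "0 \<le> Wi" unfolding Wi_def by simp
      show "(\<Sum>G\<in>Fi \<inter> \<Phi> i. measure \<nu> (G \<inter> Ann t i) powr (1 - a)) \<le> n powr a * (K * measure \<nu> (Ann t i)) powr (1 - a)"
        using FiF by (intro coreF[of _ i]) auto
      have "G \<in> \<Phi> (i + 1)" if G: "G \<in> Fi - \<Phi> i" for G
      proof -
        obtain j where "G \<in> \<Phi> j" "i \<le> j" "j \<le> i + 1" using info[of G] G by blast
        moreover have "j \<noteq> i" using G \<open>G \<in> \<Phi> j\<close> by auto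
        ultimately have "j = i + 1" by linarith
        then show ?thesis using \<open>G \<in> \<Phi> j\<close> by simp
      qed
      then show "(\<Sum>G\<in>Fi - \<Phi> i. measure \<nu> (G \<inter> Ann t i) powr (1 - a)) \<le> n powr a * (K * measure \<nu> (Ann t i)) powr (1 - a)"
        using FiF by (intro coreF[of _ "i + 1"]) auto
    qed
    also have "\<dots> = CK * real m powr (D * \<tau> * a) * (2 powr (real i * e) * measure \<nu> (Ann t i) powr (1 - a))"
    proof -
      have B0: "real B > 0" unfolding B_def using m by simp
      have e1: "n powr a = real B powr (D * \<tau> * a)"
        unfolding n_def using B0 by (simp add: powr_realpow[symmetric] powr_powr D_def \<tau>_def)
      have e2: "real B powr (D * \<tau> * a) = 4 powr (D * \<tau> * a) * real m powr (D * \<tau> * a)"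
        unfolding B_def by (simp add: powr_mult)
      have e4: "(K * measure \<nu> (Ann t i)) powr (1 - a) = K powr (1 - a) * measure \<nu> (Ann t i) powr (1 - a)"
        unfolding K_def by (simp add: powr_mult)
      show ?thesis unfolding Wi_def CK_def e1 e2 e4 by (simp add: mult_ac)
    qed
    finally show ?thesis .
  qed
  note split
  also have "(\<Sum>i\<le>J. \<Sum>G\<in>F. w G * measure \<nu> (G \<inter> Ann t i) powr (1 - a))
      \<le> (\<Sum>i\<le>J. CK * real m powr (D * \<tau> * a) * (2 powr (real i * e) * measure \<nu> (Ann t i) powr (1 - a)))"
    by (rule sum_mono) (rule per_i)
  also have "\<dots> = CK * real m powr (D * \<tau> * a) * (\<Sum>i\<le>J. 2 powr (real i * e) * measure \<nu> (Ann t i) powr (1 - a))"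
    by (simp add: sum_distrib_left)
  finally show ?thesis unfolding w_def CK_def K_def D_def \<tau>_def e_def by (intro exI[of _ J]) (simp add: mult_ac)
qed

lemma m_bound:
  assumes N: "N \<ge> 1" and d: "d \<ge> 1" and T: "T \<ge> 1" and e: "e \<ge> 0"
  shows "gridm d T N \<ge> 1 \<and> real (gridm d T N) powr e \<le> 2 powr e * real N powr (e / (real d * real T))"
proof -
  define q where "q = real N powr (1 / real (d * T))"
  have dT: "real (d * T) > 0" using d T by simp
  have q1: "q \<ge> 1" unfolding q_def using N dT by (intro ge_one_powr_ge_zero) auto
  have "1 / DeltaN d T N = q"
    unfolding DeltaN_def q_def using N by (simp add: powr_minus divide_inverse)
  then have m: "gridm d T N = nat \<lceil>q\<rceil>" unfolding gridm_def by simp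
  have c1: "\<lceil>q\<rceil> \<ge> 1" using q1 by linarith
  have rm: "real (gridm d T N) = of_int \<lceil>q\<rceil>" unfolding m using c1 by simp
  have m1: "gridm d T N \<ge> 1" unfolding m using c1 by linarith
  have "real (gridm d T N) \<le> 2 * q" unfolding rm using q1 by linarith
  then have "real (gridm d T N) powr e \<le> (2 * q) powr e" using e m1 by (intro powr_mono2) auto
  also have "\<dots> = 2 powr e * q powr e" using q1 by (simp add: powr_mult)
  also have "q powr e = real N powr (e / (real d * real T))"
    unfolding q_def by (simp add: powr_powr)
  finally show ?thesis using m1 by simp
qed

lemma ennreal_bridge:
  fixes f :: "'a \<Rightarrow> real" and g :: "nat \<Rightarrow> real"
  assumes f: "\<And>G. f G \<ge> 0" and g: "\<And>i. g i \<ge> 0" and A: "A \<ge> 0"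
    and H: "\<And>F. finite F \<Longrightarrow> F \<subseteq> \<Phi> \<Longrightarrow> \<exists>J. sum f F \<le> A * (\<Sum>i\<le>J. g i)"
  shows "(\<Sum>\<^sub>\<infinity>G\<in>\<Phi>. ennreal (f G)) \<le> ennreal A * (\<Sum>\<^sub>\<infinity>j\<in>(UNIV::nat set). ennreal (g j))"
proof (rule infsum_le_finite_sums)
  show "(\<lambda>G. ennreal (f G)) summable_on \<Phi>" by (rule nonneg_summable_on_complete) simp
  fix F assume F: "finite F" "F \<subseteq> \<Phi>"
  obtain J where J: "sum f F \<le> A * (\<Sum>i\<le>J. g i)" using H[OF F] by blast
  have "(\<Sum>G\<in>F. ennreal (f G)) = ennreal (sum f F)" using f by simp
  also have "\<dots> \<le> ennreal (A * (\<Sum>i\<le>J. g i))" using J by (rule ennreal_leI)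
  also have "\<dots> = ennreal A * (\<Sum>i\<le>J. ennreal (g i))"
    using A g by (simp add: ennreal_mult sum_nonneg)
  also have "\<dots> \<le> ennreal A * (\<Sum>\<^sub>\<infinity>j\<in>(UNIV::nat set). ennreal (g j))"
  proof (intro mult_left_mono)
    show "(\<Sum>i\<le>J. ennreal (g i)) \<le> (\<Sum>\<^sub>\<infinity>j\<in>(UNIV::nat set). ennreal (g j))"
    proof -
      have "(\<Sum>i\<le>J. ennreal (g i)) = (\<Sum>\<^sub>\<infinity>i\<in>{..J}. ennreal (g i))" by simp
      also have "\<dots> \<le> (\<Sum>\<^sub>\<infinity>j\<in>(UNIV::nat set). ennreal (g j))"
        by (rule infsum_mono_neutral) (auto intro: nonneg_summable_on_complete)
      finally show ?thesis .
    qed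
  qed simp
  finally show "(\<Sum>G\<in>F. ennreal (f G)) \<le> ennreal A * (\<Sum>\<^sub>\<infinity>j\<in>(UNIV::nat set). ennreal (g j))" .
qed

definition LH :: "(nat \<Rightarrow> real^'d) measure \<Rightarrow> nat \<Rightarrow> nat \<Rightarrow> nat \<Rightarrow> real \<Rightarrow> real \<Rightarrow> real \<Rightarrow> real \<Rightarrow> ennreal" where
  "LH \<nu> T N t a b c r = (\<Sum>\<^sub>\<infinity>G\<in>(hatPhi T N t :: (nat \<Rightarrow> real^'d) set set).
         ennreal ((setnorm t G powr r + 1) powr b * (setdiam t G + 1) powr c * measure \<nu> G powr (1 - a)))"

definition LK :: "(nat \<Rightarrow> real^'d) measure \<Rightarrow> nat \<Rightarrow> nat \<Rightarrow> nat \<Rightarrow> real \<Rightarrow> real \<Rightarrow> real \<Rightarrow> real \<Rightarrow> ennreal" where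
  "LK \<nu> T N t a b c r = (\<Sum>\<^sub>\<infinity>G\<in>(checkPhi T N t :: (nat \<Rightarrow> real^'d) set set).
         ennreal ((setnorm t G powr r + 1) powr b * (setdiam t G + 1) powr c * measure \<nu> G powr (1 - a)))"

definition RH :: "(nat \<Rightarrow> real^'d) measure \<Rightarrow> nat \<Rightarrow> real \<Rightarrow> real \<Rightarrow> real \<Rightarrow> ennreal" where
  "RH \<nu> t a b r = (\<Sum>\<^sub>\<infinity>j\<in>(UNIV::nat set).
            ennreal (2 powr (real j * (r * b + real CARD('d) * real t * a)) * measure \<nu> (Ann t j :: (nat \<Rightarrow> real^'d) set) powr (1 - a)))"

definition RK :: "(nat \<Rightarrow> real^'d) measure \<Rightarrow> nat \<Rightarrow> real \<Rightarrow> real \<Rightarrow> real \<Rightarrow> real \<Rightarrow> ennreal" where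
  "RK \<nu> t a b c r = (\<Sum>\<^sub>\<infinity>j\<in>(UNIV::nat set).
            ennreal (2 powr (real j * (r * b + c)) * measure \<nu> (Ann t j :: (nat \<Rightarrow> real^'d) set) powr (1 - a)))"

lemma per_t:
  fixes \<nu> :: "(nat \<Rightarrow> real^'d) measure"
  assumes fm: "finite_measure \<nu>" and sets: "sets \<nu> = sets (PiM {..<t} (\<lambda>_. (borel :: (real^'d) measure)))"
    and t: "t \<ge> 1" and T: "T \<ge> 1" and a: "0 \<le> a" "a < 1" and bc: "b > 0" "c > 0" "r \<ge> 0"
  shows "\<exists>C>0. \<forall>N::nat. N \<ge> 1 \<longrightarrow>
     LH \<nu> T N t a b c r \<le> ennreal (C * real N powr (real t * a / real T)) * RH \<nu> t a b r \<and>
     LK \<nu> T N t a b c r \<le> ennreal (C * real N powr (real t * a / real T)) * RK \<nu> t a b c r"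
proof -
  define D where "D = real CARD('d)"
  define \<tau> where "\<tau> = real t"
  have D1: "D \<ge> 1" unfolding D_def by simp
  have \<tau>1: "\<tau> \<ge> 1" unfolding \<tau>_def using t by simp
  define e where "e = D * \<tau> * a"
  have e0: "e \<ge> 0" unfolding e_def using D1 \<tau>1 a by simp
  define CH where "CH = 2 powr b * (2 * \<tau> * D) powr (r * b) * (\<tau> * D + 1) powr c
          * 4 powr (D * \<tau> * a) * (2 ^ (CARD('d) * t)) powr (1 - a)"
  define CK where "CK = 2 powr b * (\<tau> * D) powr (r * b) * (\<tau> * D + 1) powr c * 2 powr (r * b + c) * 2
          * 4 powr (D * \<tau> * a) * (2 ^ (CARD('d) * t)) powr (1 - a)"
  have pos0: "\<tau> > 0" "D > 0" using D1 \<tau>1 by auto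
  then have tD: "\<tau> * D > 0" by simp
  have pos: "\<tau> > 0" "D > 0" "\<tau> * D + 1 \<noteq> 0" using pos0 tD by linarith+
  have CH0: "CH > 0" unfolding CH_def using pos by (intro mult_pos_pos) auto
  have CK0: "CK > 0" unfolding CK_def using pos by (intro mult_pos_pos) auto
  define C where "C = 2 powr e * (CH + CK)"
  have C0: "C > 0" unfolding C_def using CH0 CK0 by simp
  have main: "LH \<nu> T N t a b c r \<le> ennreal (C * real N powr (real t * a / real T)) * RH \<nu> t a b r \<and>
     LK \<nu> T N t a b c r \<le> ennreal (C * real N powr (real t * a / real T)) * RK \<nu> t a b c r"
    if N: "N \<ge> 1" for N
  proof -
    define m where "m = gridm CARD('d) T N"
    have mb: "m \<ge> 1 \<and> real m powr e \<le> 2 powr e * real N powr (e / (real CARD('d) * real T))"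
      unfolding m_def using m_bound[OF N _ T e0, of "CARD('d)"] by simp
    have ex: "e / (real CARD('d) * real T) = real t * a / real T"
      unfolding e_def D_def \<tau>_def by (simp add: field_simps)
    have mb2: "real m powr e \<le> 2 powr e * real N powr (real t * a / real T)" using mb ex by simp
    have Npos: "real N powr (real t * a / real T) \<ge> 0" by simp
    show ?thesis
    proof
      show "LH \<nu> T N t a b c r \<le> ennreal (C * real N powr (real t * a / real T)) * RH \<nu> t a b r"
        unfolding LH_def RH_def
      proof (rule ennreal_bridge)
        fix F assume F: "finite F" "F \<subseteq> (hatPhi T N t :: (nat \<Rightarrow> real^'d) set set)"
        have F2: "F \<subseteq> {cube t (1 / real m) z | z. True}" using F(2) unfolding hatPhi_def m_def by simp
        obtain J where J: "(\<Sum>G\<in>F. (setnorm t G powr r + 1) powr b * (setdiam t G + 1) powr c * measure \<nu> G powr (1 - a))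
          \<le> CH * real m powr e * (\<Sum>i\<le>J. 2 powr (real i * (r * b + real CARD('d) * real t * a)) * measure \<nu> (Ann t i) powr (1 - a))"
          using hat_case[OF fm sets t _ a bc F(1) F2] mb unfolding CH_def e_def D_def \<tau>_def by auto
        have S0: "0 \<le> (\<Sum>i\<le>J. 2 powr (real i * (r * b + real CARD('d) * real t * a)) * measure \<nu> (Ann t i) powr (1 - a))"
          by (intro sum_nonneg) simp
        have "CH * real m powr e \<le> CH * (2 powr e * real N powr (real t * a / real T))"
          using mb2 CH0 by (intro mult_left_mono) auto
        also have "\<dots> \<le> C * real N powr (real t * a / real T)"
          unfolding C_def using CK0 Npos by (simp add: algebra_simps mult_right_mono)
        finally have "CH * real m powr e \<le> C * real N powr (real t * a / real T)" .
        then have "CH * real m powr e * (\<Sum>i\<le>J. 2 powr (real i * (r * b + real CARD('d) * real t * a)) * measure \<nu> (Ann t i) powr (1 - a))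
           \<le> C * real N powr (real t * a / real T) * (\<Sum>i\<le>J. 2 powr (real i * (r * b + real CARD('d) * real t * a)) * measure \<nu> (Ann t i) powr (1 - a))"
          using S0 by (rule mult_right_mono)
        then show "\<exists>J. (\<Sum>G\<in>F. (setnorm t G powr r + 1) powr b * (setdiam t G + 1) powr c * measure \<nu> G powr (1 - a))
          \<le> C * real N powr (real t * a / real T) * (\<Sum>i\<le>J. 2 powr (real i * (r * b + real CARD('d) * real t * a)) * measure \<nu> (Ann t i) powr (1 - a))"
          using J by (meson order_trans)
      qed (use C0 in auto)
      show "LK \<nu> T N t a b c r \<le> ennreal (C * real N powr (real t * a / real T)) * RK \<nu> t a b c r"
        unfolding LK_def RK_def
      proof (rule ennreal_bridge)
        fix F assume F: "finite F" "F \<subseteq> (checkPhi T N t :: (nat \<Rightarrow> real^'d) set set)"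
        have F2: "F \<subseteq> (\<Union>j. {cube t (2^j / 2 / real m) z | z. cube t (2^j / 2 / real m) z \<subseteq> AnnCl t j})"
          using F(2) unfolding checkPhi_def m_def by simp
        obtain J where J: "(\<Sum>G\<in>F. (setnorm t G powr r + 1) powr b * (setdiam t G + 1) powr c * measure \<nu> G powr (1 - a))
          \<le> CK * real m powr e * (\<Sum>i\<le>J. 2 powr (real i * (r * b + c)) * measure \<nu> (Ann t i) powr (1 - a))"
          using check_case[OF fm sets t _ a bc F(1) F2] mb unfolding CK_def e_def D_def \<tau>_def by auto
        have S0: "0 \<le> (\<Sum>i\<le>J. 2 powr (real i * (r * b + c)) * measure \<nu> (Ann t i) powr (1 - a))"
          by (intro sum_nonneg) simp
        have "CK * real m powr e \<le> CK * (2 powr e * real N powr (real t * a / real T))"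
          using mb2 CK0 by (intro mult_left_mono) auto
        also have "\<dots> \<le> C * real N powr (real t * a / real T)"
          unfolding C_def using CH0 Npos by (simp add: algebra_simps mult_right_mono)
        finally have "CK * real m powr e \<le> C * real N powr (real t * a / real T)" .
        then have "CK * real m powr e * (\<Sum>i\<le>J. 2 powr (real i * (r * b + c)) * measure \<nu> (Ann t i) powr (1 - a))
           \<le> C * real N powr (real t * a / real T) * (\<Sum>i\<le>J. 2 powr (real i * (r * b + c)) * measure \<nu> (Ann t i) powr (1 - a))"
          using S0 by (rule mult_right_mono)
        then show "\<exists>J. (\<Sum>G\<in>F. (setnorm t G powr r + 1) powr b * (setdiam t G + 1) powr c * measure \<nu> G powr (1 - a))
          \<le> C * real N powr (real t * a / real T) * (\<Sum>i\<le>J. 2 powr (real i * (r * b + c)) * measure \<nu> (Ann t i) powr (1 - a))"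
          using J by (meson order_trans)
      qed (use C0 in auto)
    qed
  qed
  show ?thesis using C0 main by blast
qed

theorem mainTheorem7:
  fixes \<mu> :: "(nat \<Rightarrow> real^'d) measure" and T :: nat and a b c r :: real
  assumes "T \<ge> 2"
    and "prob_space \<mu>"
    and "sets \<mu> = sets (PiM {..<T} (\<lambda>_. (borel :: (real^'d) measure)))"
    and "0 \<le> a" and "a < 1" and "b > 0" and "c > 0" and "r \<ge> 0"
  shows "\<exists>C::real. C > 0 \<and> (\<forall>N::nat. N \<ge> 1 \<longrightarrow> (\<forall>t\<in>{1..T-1}.
     (\<Sum>\<^sub>\<infinity>G\<in>(hatPhi T N t :: (nat \<Rightarrow> real^'d) set set).
         ennreal ((setnorm t G powr r + 1) powr b * (setdiam t G + 1) powr c * marg \<mu> t G powr (1 - a)))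
       \<le> ennreal (C * real N powr (real t * a / real T)) *
         (\<Sum>\<^sub>\<infinity>j\<in>(UNIV::nat set).
            ennreal (2 powr (real j * (r * b + real CARD('d) * real t * a)) * marg \<mu> t (Ann t j) powr (1 - a)))
     \<and>
     (\<Sum>\<^sub>\<infinity>G\<in>(checkPhi T N t :: (nat \<Rightarrow> real^'d) set set).
         ennreal ((setnorm t G powr r + 1) powr b * (setdiam t G + 1) powr c * marg \<mu> t G powr (1 - a)))
       \<le> ennreal (C * real N powr (real t * a / real T)) *
         (\<Sum>\<^sub>\<infinity>j\<in>(UNIV::nat set).
            ennreal (2 powr (real j * (r * b + c)) * marg \<mu> t (Ann t j :: (nat \<Rightarrow> real^'d) set) powr (1 - a)))))"
proof -
  note T = assms(1) and prob = assms(2) and sets\<mu> = assms(3) and a = assms(4,5) and bc = assms(6,7,8)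
  define \<nu> where "\<nu> t = distr \<mu> (PiM {..<t} (\<lambda>_. (borel :: (real^'d) measure))) (\<lambda>x. restrict x {..<t})" for t
  have marg: "marg \<mu> t G = measure (\<nu> t) G" for t G unfolding marg_def \<nu>_def by simp
  have nu: "finite_measure (\<nu> t) \<and> sets (\<nu> t) = sets (PiM {..<t} (\<lambda>_. (borel :: (real^'d) measure)))"
    if t: "t \<le> T" for t
  proof -
    have "(\<lambda>x. restrict x {..<t}) \<in> measurable (PiM {..<T} (\<lambda>_. (borel :: (real^'d) measure))) (PiM {..<t} (\<lambda>_. (borel :: (real^'d) measure)))"
      using t by (intro measurable_restrict_subset) auto
    then have meas: "(\<lambda>x. restrict x {..<t}) \<in> measurable \<mu> (PiM {..<t} (\<lambda>_. (borel :: (real^'d) measure)))"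
      by (subst measurable_cong_sets[OF sets\<mu> refl])
    have "prob_space (\<nu> t)" unfolding \<nu>_def using prob meas by (rule prob_space.prob_space_distr)
    then have "finite_measure (\<nu> t)" unfolding prob_space_def by blast
    moreover have "sets (\<nu> t) = sets (PiM {..<t} (\<lambda>_. (borel :: (real^'d) measure)))" unfolding \<nu>_def by simp
    ultimately show ?thesis by blast
  qed
  have "\<forall>t\<in>{1..T-1}. \<exists>C>0. \<forall>N::nat. N \<ge> 1 \<longrightarrow>
     LH (\<nu> t) T N t a b c r \<le> ennreal (C * real N powr (real t * a / real T)) * RH (\<nu> t) t a b r \<and>
     LK (\<nu> t) T N t a b c r \<le> ennreal (C * real N powr (real t * a / real T)) * RK (\<nu> t) t a b c r"
  proof
    fix t assume t: "t \<in> {1..T-1}"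
    then have "t \<le> T" by auto
    then show "\<exists>C>0. \<forall>N::nat. N \<ge> 1 \<longrightarrow>
     LH (\<nu> t) T N t a b c r \<le> ennreal (C * real N powr (real t * a / real T)) * RH (\<nu> t) t a b r \<and>
     LK (\<nu> t) T N t a b c r \<le> ennreal (C * real N powr (real t * a / real T)) * RK (\<nu> t) t a b c r"
      using nu t T a bc by (intro per_t) auto
  qed
  then obtain Cf where Cf: "\<And>t. t \<in> {1..T-1} \<Longrightarrow> Cf t > 0 \<and> (\<forall>N::nat. N \<ge> 1 \<longrightarrow>
     LH (\<nu> t) T N t a b c r \<le> ennreal (Cf t * real N powr (real t * a / real T)) * RH (\<nu> t) t a b r \<and>
     LK (\<nu> t) T N t a b c r \<le> ennreal (Cf t * real N powr (real t * a / real T)) * RK (\<nu> t) t a b c r)"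
    by metis
  define C where "C = (\<Sum>t\<in>{1..T-1}. Cf t)"
  have C0: "C > 0" unfolding C_def using Cf T by (intro sum_pos) auto
  have CfC: "Cf t \<le> C" if "t \<in> {1..T-1}" for t
    unfolding C_def using Cf that by (intro member_le_sum) (auto intro: less_imp_le)
  have key: "LH (\<nu> t) T N t a b c r \<le> ennreal (C * real N powr (real t * a / real T)) * RH (\<nu> t) t a b r \<and>
     LK (\<nu> t) T N t a b c r \<le> ennreal (C * real N powr (real t * a / real T)) * RK (\<nu> t) t a b c r"
    if t: "t \<in> {1..T-1}" and N: "N \<ge> 1" for t N
  proof -
    have le: "ennreal (Cf t * real N powr (real t * a / real T)) \<le> ennreal (C * real N powr (real t * a / real T))"
      using CfC[OF t] by (intro ennreal_leI mult_right_mono) auto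
    show ?thesis using Cf[OF t] N le by (meson mult_right_mono order_trans zero_le)
  qed
  show ?thesis
  proof (intro exI[of _ C] conjI allI impI ballI)
    show "C > 0" by (rule C0)
    fix N :: nat and t assume N: "N \<ge> 1" and t: "t \<in> {1..T-1}"
    show "(\<Sum>\<^sub>\<infinity>G\<in>(hatPhi T N t :: (nat \<Rightarrow> real^'d) set set).
         ennreal ((setnorm t G powr r + 1) powr b * (setdiam t G + 1) powr c * marg \<mu> t G powr (1 - a)))
       \<le> ennreal (C * real N powr (real t * a / real T)) *
         (\<Sum>\<^sub>\<infinity>j\<in>(UNIV::nat set).
            ennreal (2 powr (real j * (r * b + real CARD('d) * real t * a)) * marg \<mu> t (Ann t j) powr (1 - a)))"
      using key[OF t N] unfolding LH_def RH_def marg by simp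
    show "(\<Sum>\<^sub>\<infinity>G\<in>(checkPhi T N t :: (nat \<Rightarrow> real^'d) set set).
         ennreal ((setnorm t G powr r + 1) powr b * (setdiam t G + 1) powr c * marg \<mu> t G powr (1 - a)))
       \<le> ennreal (C * real N powr (real t * a / real T)) *
         (\<Sum>\<^sub>\<infinity>j\<in>(UNIV::nat set).
            ennreal (2 powr (real j * (r * b + c)) * marg \<mu> t (Ann t j :: (nat \<Rightarrow> real^'d) set) powr (1 - a)))"
      using key[OF t N] unfolding LK_def RK_def marg by simp
  qed
qed

end
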